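(* Fix a client $k\in[N]$, real numbers $\lambda^{(1)}_u,\lambda^{(2)}_u$ ($u\in\mathcal U_g$) and $\mu^{(1)}_{k,u},\mu^{(2)}_{k,u}$ ($u\in\mathcal U_{l,k}$), and for $a\in\mathcal A$ set $$\mathbf M^{\lambda,\mu}(a,k)=\mathbf I-\frac{1}{p_{a,k}}\Big[\sum_{u\in\mathcal U_g}(\lambda^{(1)}_u-\lambda^{(2)}_u)\mathbf D^{a,k}_u-\sum_{u\in\mathcal U_{l,k}}(\mu^{(1)}_{k,u}-\mu^{(2)}_{k,u})\mathbf D^{a,k}_u\Big],$$ and $\overline{\mathbf M}^{\lambda,\mu}(a,k)=\mathbf M^{\lambda,\mu}(a,k)+\kappa\mathbf 1_{m\times m}$, where the constant $\kappa$ is chosen so that all entries of $\overline{\mathbf M}^{\lambda,\mu}(a,k)$ are strictly positive for every $a\in\mathcal A$. For a scoring function $\mathbf s:\mathcal X\to\mathbb R^m$ define the personalized cost-sensitive loss $$\ell_k(y,\mathbf s(x),a)=-\sum_{i=1}^m\overline{\mathbf M}^{\lambda,\mu}_{y,i}(a,k)\log\frac{\exp([\mathbf s(x)]_i)}{\sum_{j=1}^m\exp([\mathbf s(x)]_j)}.$$ Let $\mathbf s_k^*$ be a scoring function minimizing the expected loss $\mathbb E[\ell_k(Y,\mathbf s(X),A)\mid K=k]$ over the local data distribution $\mathbb P(X,A,Y\mid K=k)$. Then the classifier $h_k^*(x)=e_y$, $y\in\arg\max_{j\in[m]}[\mathbf s_k^*(x)]_j$, coincides with the classifier $x\mapsto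 e_y$, $y\in\arg\max_{j\in[m]}\big(\sum_{a\in\mathcal A}\mathbb P(A=a\mid X=x,K=k)[\mathbf M^{\lambda,\mu}(a,k)]^\top\eta(x,a,k)\big)_j$; precisely, for ($\mathbb P(X\mid K=k)$-almost) every $x$, $$\arg\max_{j\in[m]}[\mathbf s_k^*(x)]_j\subseteq\arg\max_{j\in[m]}\Big(\sum_{a\in\mathcal A}\mathbb P(A=a\mid X=x,K=k)\,[\mathbf M^{\lambda,\mu}(a,k)]^\top\eta(x,a,k)\Big)_j.$$
   Context: Let $(X,A,Y,K)$ be a random tuple with $X\in\mathcal X\subseteq\mathbb R^d$, sensitive attribute $A$ in a finite set $\mathcal A$, label $Y\in[m]$ and client index $K\in[N]$; $p_{a,k}=\mathbb P(A=a,K=k)>0$. The Bayes score is $\eta(x,a,k)\in\Delta_m$ with $\eta_y(x,a,k)=\mathbb P(Y=y\mid X=x,A=a,K=k)$, $\Delta_m$ being the probability simplex in $\mathbb R^m$ and $e_y$ the $y$-th standard basis vector. $\mathcal U_g$ and $\mathcal U_{l,k}$ are finite index sets and $\mathbf D^{a,k}_u$ ($a\in\mathcal A$, $u\in\mathcal U_g\cup\mathcal U_{l,k}$) are fixed real $m\times m$ matrices. $\mathbf I$ is the $m\times m$ identity and $\mathbf 1_{m\times m}$ the all-ones matrix. Minimization is over measurable $\mathbf s:\mathcal X\to\mathbb R^m$. *)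

theory Defs
  imports "HOL-Probability.Probability"
begin

definition Mmat :: "real \<Rightarrow> ('u \<Rightarrow> real) \<Rightarrow> ('u \<Rightarrow> real) \<Rightarrow> ('u \<Rightarrow> real) \<Rightarrow> ('u \<Rightarrow> real)
    \<Rightarrow> 'u set \<Rightarrow> 'u set \<Rightarrow> ('u \<Rightarrow> real^'m^'m) \<Rightarrow> real^'m^'m" where
  "Mmat p lam1 lam2 mu1 mu2 Ug Ul D =
     mat 1 - (1 / p) *\<^sub>R ((\<Sum>u\<in>Ug. (lam1 u - lam2 u) *\<^sub>R D u) - (\<Sum>u\<in>Ul. (mu1 u - mu2 u) *\<^sub>R D u))"

definition Mbar :: "real \<Rightarrow> real^'m^'m \<Rightarrow> real^'m^'m" where
  "Mbar \<kappa> M = M + (\<chi> i j. \<kappa>)"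

definition pcs_loss :: "real^'m^'m \<Rightarrow> 'm \<Rightarrow> real^'m \<Rightarrow> real" where
  "pcs_loss Mb y z = - (\<Sum>i\<in>UNIV. Mb $ y $ i * ln (exp (z $ i) / (\<Sum>j\<in>UNIV. exp (z $ j))))"

definition argmax_set :: "real^'m \<Rightarrow> 'm set" where
  "argmax_set v = {j. \<forall>i. v $ i \<le> v $ j}"

definition cond_exp_event :: "'w measure \<Rightarrow> ('w \<Rightarrow> real) \<Rightarrow> 'w set \<Rightarrow> ennreal" where
  "cond_exp_event M f E = (\<integral>\<^sup>+ w. ennreal (f w) * indicator E w \<partial>M) / emeasure M E"

end

theory Submission
  imports Defs
begin


lemma ln_less_minus_one_strict:
  fixes x :: real assumes "0 < x" "x \<noteq> 1" shows "ln x < x - 1"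
proof -
  have s: "sqrt x > 0" using assms by simp
  have sx: "sqrt x \<noteq> 1" using assms by auto
  have "ln x = 2 * ln (sqrt x)" using assms by (simp add: ln_sqrt)
  also have "\<dots> \<le> 2 * (sqrt x - 1)" using ln_le_minus_one[OF s] by simp
  also have "\<dots> < x - 1"
  proof -
    have "(sqrt x - 1)^2 > 0" using sx by simp
    moreover have "(sqrt x)^2 = x" using assms by simp
    ultimately show ?thesis by (simp add: power2_eq_square algebra_simps)
  qed
  finally show ?thesis .
qed

lemma gibbs_term:
  fixes c p C :: real assumes "c > 0" "p > 0" "C > 0"
  shows "c * - ln (c / C) \<le> c * - ln p + (C * p - c)"
    and "p * C \<noteq> c \<Longrightarrow> c * - ln (c / C) < c * - ln p + (C * p - c)"
proof -
  define t where "t = p * C / c"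
  have t: "t > 0" using assms by (simp add: t_def)
  have lt: "ln t = ln p + ln C - ln c" using assms by (simp add: t_def ln_div ln_mult)
  have lc: "ln (c / C) = ln c - ln C" using assms by (simp add: ln_div)
  have ct: "c * t = p * C" using assms by (simp add: t_def)
  have "c * ln t \<le> c * (t - 1)" using ln_le_minus_one[OF t] assms by simp
  then show "c * - ln (c / C) \<le> c * - ln p + (C * p - c)"
    unfolding lc using lt ct by (simp add: algebra_simps)
  assume "p * C \<noteq> c"
  then have "t \<noteq> 1" using assms by (auto simp: t_def)
  then have "c * ln t < c * (t - 1)" using ln_less_minus_one_strict[OF t] assms by simp
  then show "c * - ln (c / C) < c * - ln p + (C * p - c)"
    unfolding lc using lt ct by (simp add: algebra_simps)
qed

definition softm :: "real^'m::finite \<Rightarrow> 'm \<Rightarrow> real" where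
  "softm z i = exp (z $ i) / (\<Sum>j\<in>UNIV. exp (z $ j))"

lemma softm_pos: "softm z i > 0"
  unfolding softm_def by (intro divide_pos_pos) (auto intro: sum_pos)

lemma softm_sum: "(\<Sum>i\<in>UNIV. softm z i) = 1"
proof -
  have "(\<Sum>j\<in>UNIV. exp (z $ j)) > 0" by (auto intro: sum_pos)
  then show ?thesis unfolding softm_def by (simp add: sum_divide_distrib[symmetric])
qed

lemma gibbs:
  fixes c z :: "real^'m::finite"
  assumes c: "\<And>i. c$i > 0"
  shows "(\<Sum>i\<in>UNIV. c$i * - ln (c$i / (\<Sum>j\<in>UNIV. c$j))) \<le> (\<Sum>i\<in>UNIV. c$i * - ln (softm z i))"
    and "\<not> argmax_set z \<subseteq> argmax_set c \<Longrightarrow>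
      (\<Sum>i\<in>UNIV. c$i * - ln (c$i / (\<Sum>j\<in>UNIV. c$j))) < (\<Sum>i\<in>UNIV. c$i * - ln (softm z i))"
proof -
  define C where "C = (\<Sum>j\<in>UNIV. c$j)"
  have C: "C > 0" unfolding C_def using c by (auto intro: sum_pos)
  have z: "(\<Sum>i\<in>UNIV. C * softm z i - c$i) = 0"
    by (simp add: sum_subtractf sum_distrib_left[symmetric] softm_sum C_def)
  have "(\<Sum>i\<in>UNIV. c$i * - ln (c$i / C)) \<le> (\<Sum>i\<in>UNIV. c$i * - ln (softm z i) + (C * softm z i - c$i))"
    by (intro sum_mono gibbs_term(1) c softm_pos C)
  also have "\<dots> = (\<Sum>i\<in>UNIV. c$i * - ln (softm z i)) + (\<Sum>i\<in>UNIV. C * softm z i - c$i)" by (simp only: sum.distrib)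
  also have "\<dots> = (\<Sum>i\<in>UNIV. c$i * - ln (softm z i))" using z by simp
  finally show "(\<Sum>i\<in>UNIV. c$i * - ln (c$i / (\<Sum>j\<in>UNIV. c$j))) \<le> (\<Sum>i\<in>UNIV. c$i * - ln (softm z i))"
    by (simp add: C_def)
  assume na: "\<not> argmax_set z \<subseteq> argmax_set c"
  have "\<exists>i. softm z i * C \<noteq> c$i"
  proof (rule ccontr)
    assume "\<not> ?thesis"
    then have eq: "\<And>i. c$i = softm z i * C" by auto
    from na obtain j where j: "j \<in> argmax_set z" "j \<notin> argmax_set c" by auto
    have "\<And>i. c$i \<le> c$j"
    proof -
      fix i
      have "z$i \<le> z$j" using j(1) by (simp add: argmax_set_def)
      then have "softm z i \<le> softm z j" unfolding softm_def
        by (intro divide_right_mono) (auto intro: sum_nonneg)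
      then show "c$i \<le> c$j" using eq C by (simp add: mult_right_mono)
    qed
    then show False using j(2) by (simp add: argmax_set_def)
  qed
  then obtain i0 where i0: "softm z i0 * C \<noteq> c$i0" by auto
  have "(\<Sum>i\<in>UNIV. c$i * - ln (c$i / C)) < (\<Sum>i\<in>UNIV. c$i * - ln (softm z i) + (C * softm z i - c$i))"
  proof (rule sum_strict_mono_ex1)
    show "\<forall>x\<in>UNIV. c$x * - ln (c$x / C) \<le> c$x * - ln (softm z x) + (C * softm z x - c$x)"
      using gibbs_term(1)[OF c softm_pos C] by blast
    show "\<exists>x\<in>UNIV. c$x * - ln (c$x / C) < c$x * - ln (softm z x) + (C * softm z x - c$x)"
      using gibbs_term(2)[OF c softm_pos C, of z i0 i0] i0 by blast
  qed simp
  also have "\<dots> = (\<Sum>i\<in>UNIV. c$i * - ln (softm z i)) + (\<Sum>i\<in>UNIV. C * softm z i - c$i)" by (simp only: sum.distrib)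
  also have "\<dots> = (\<Sum>i\<in>UNIV. c$i * - ln (softm z i))" using z by simp
  finally show "(\<Sum>i\<in>UNIV. c$i * - ln (c$i / (\<Sum>j\<in>UNIV. c$j))) < (\<Sum>i\<in>UNIV. c$i * - ln (softm z i))"
    by (simp add: C_def)
qed



lemma transfer_density:
  fixes M :: "'w measure" and X :: "'w \<Rightarrow> 'x" and h :: "'x \<Rightarrow> real" and g :: "'x \<Rightarrow> ennreal"
  assumes PS: "prob_space M" and Xm: "X \<in> M \<rightarrow>\<^sub>M S"
    and EP: "{w\<in>space M. P w} \<in> sets M" and EP': "{w\<in>space M. P' w} \<in> sets M"
    and hm: "h \<in> borel_measurable S" and hb: "\<And>x. x \<in> space S \<Longrightarrow> 0 \<le> h x \<and> h x \<le> 1"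
    and hyp: "\<And>B. B \<in> sets S \<Longrightarrow> measure M {w\<in>space M. X w \<in> B \<and> P' w}
        = (\<integral>w\<in>{w\<in>space M. X w \<in> B \<and> P w}. h (X w) \<partial>M)"
    and gm: "g \<in> borel_measurable S"
  shows "(\<integral>\<^sup>+w. g (X w) * indicator {w\<in>space M. P' w} w \<partial>M)
       = (\<integral>\<^sup>+w. g (X w) * ennreal (h (X w)) * indicator {w\<in>space M. P w} w \<partial>M)"
proof -
  interpret prob_space M by (rule PS)
  define E where "E = {w\<in>space M. P w}"
  define E' where "E' = {w\<in>space M. P' w}"
  have E: "E \<in> sets M" "E' \<in> sets M" using EP EP' by (auto simp: E_def E'_def)
  have hXm: "(\<lambda>w. h (X w)) \<in> borel_measurable M" using hm Xm by measurable
  have eqm: "distr (density M (indicator E')) S X = density (distr (density M (indicator E)) S X) h"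
  proof (rule measure_eqI)
    show "sets (distr (density M (indicator E')) S X) = sets (density (distr (density M (indicator E)) S X) h)"
      by simp
    fix B assume "B \<in> sets (distr (density M (indicator E')) S X)"
    then have B: "B \<in> sets S" by simp
    have XB: "X -` B \<inter> space M \<in> sets M" using Xm B by (simp add: measurable_sets)
    have setB: "{w\<in>space M. X w \<in> B \<and> P w} \<in> sets M" "{w\<in>space M. X w \<in> B \<and> P' w} \<in> sets M"
    proof -
      have "{w\<in>space M. X w \<in> B \<and> P w} = (X -` B \<inter> space M) \<inter> E" by (auto simp: E_def)
      then show "{w\<in>space M. X w \<in> B \<and> P w} \<in> sets M" using XB E by simp
      have "{w\<in>space M. X w \<in> B \<and> P' w} = (X -` B \<inter> space M) \<inter> E'" by (auto simp: E'_def)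
      then show "{w\<in>space M. X w \<in> B \<and> P' w} \<in> sets M" using XB E by simp
    qed
    have "emeasure (distr (density M (indicator E')) S X) B
        = emeasure (density M (indicator E')) (X -` B \<inter> space M)"
      using B Xm by (simp add: emeasure_distr)
    also have "\<dots> = (\<integral>\<^sup>+w. indicator E' w * indicator (X -` B \<inter> space M) w \<partial>M)"
      using XB E by (simp add: emeasure_density nn_integral_set_ennreal)
    also have "\<dots> = (\<integral>\<^sup>+w. indicator {w\<in>space M. X w \<in> B \<and> P' w} w \<partial>M)"
      by (intro nn_integral_cong) (auto simp: E'_def split: split_indicator)
    also have "\<dots> = emeasure M {w\<in>space M. X w \<in> B \<and> P' w}"
      using setB by simp
    also have "\<dots> = ennreal (measure M {w\<in>space M. X w \<in> B \<and> P' w})"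
      by (simp add: emeasure_eq_measure)
    also have "\<dots> = ennreal (\<integral>w\<in>{w\<in>space M. X w \<in> B \<and> P w}. h (X w) \<partial>M)"
      using hyp[OF B] by simp
    also have "\<dots> = (\<integral>\<^sup>+w. ennreal (indicator {w\<in>space M. X w \<in> B \<and> P w} w *\<^sub>R h (X w)) \<partial>M)"
      unfolding set_lebesgue_integral_def
    proof (rule nn_integral_eq_integral[symmetric])
      show "integrable M (\<lambda>w. indicat_real {w \<in> space M. X w \<in> B \<and> P w} w *\<^sub>R h (X w))"
      proof (rule integrable_const_bound[where B=1])
        show "AE x in M. norm (indicat_real {w \<in> space M. X w \<in> B \<and> P w} x *\<^sub>R h (X x)) \<le> 1"
          using hb measurable_space[OF Xm] by (auto split: split_indicator)
        show "(\<lambda>w. indicat_real {w \<in> space M. X w \<in> B \<and> P w} w *\<^sub>R h (X w)) \<in> borel_measurable M"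
          using setB hXm by measurable
      qed
      show "AE x in M. 0 \<le> indicat_real {w \<in> space M. X w \<in> B \<and> P w} x *\<^sub>R h (X x)"
        using hb measurable_space[OF Xm] by (auto split: split_indicator)
    qed
    also have "\<dots> = (\<integral>\<^sup>+w. indicator E w * (ennreal (h (X w)) * indicator B (X w)) \<partial>M)"
      by (intro nn_integral_cong) (auto simp: E_def split: split_indicator)
    also have "\<dots> = (\<integral>\<^sup>+w. ennreal (h (X w)) * indicator B (X w) \<partial>density M (indicator E))"
      using E hXm B Xm by (subst nn_integral_density) auto
    also have "\<dots> = (\<integral>\<^sup>+x. ennreal (h x) * indicator B x \<partial>distr (density M (indicator E)) S X)"
      using hm B Xm by (subst nn_integral_distr) auto
    also have "\<dots> = emeasure (density (distr (density M (indicator E)) S X) h) B"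
      using hm B by (subst emeasure_density) (auto simp: nn_integral_set_ennreal)
    finally show "emeasure (distr (density M (indicator E')) S X) B
      = emeasure (density (distr (density M (indicator E)) S X) h) B" .
  qed
  have "(\<integral>\<^sup>+w. g (X w) * indicator E' w \<partial>M) = (\<integral>\<^sup>+w. indicator E' w * g (X w) \<partial>M)"
    by (simp add: mult.commute)
  also have "\<dots> = (\<integral>\<^sup>+w. g (X w) \<partial>density M (indicator E'))"
    using E gm Xm by (subst nn_integral_density) auto
  also have "\<dots> = (\<integral>\<^sup>+x. g x \<partial>distr (density M (indicator E')) S X)"
    using gm Xm by (subst nn_integral_distr) auto
  also have "\<dots> = (\<integral>\<^sup>+x. g x \<partial>density (distr (density M (indicator E)) S X) h)"
    by (simp add: eqm)
  also have "\<dots> = (\<integral>\<^sup>+x. ennreal (h x) * g x \<partial>distr (density M (indicator E)) S X)"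
    using gm hm by (subst nn_integral_density) auto
  also have "\<dots> = (\<integral>\<^sup>+w. ennreal (h (X w)) * g (X w) \<partial>density M (indicator E))"
    using gm hm Xm by (subst nn_integral_distr) auto
  also have "\<dots> = (\<integral>\<^sup>+w. indicator E w * (ennreal (h (X w)) * g (X w)) \<partial>M)"
    using E gm hm Xm by (subst nn_integral_density) auto
  also have "\<dots> = (\<integral>\<^sup>+w. g (X w) * ennreal (h (X w)) * indicator E w \<partial>M)"
    by (intro nn_integral_cong) (simp add: mult_ac)
  finally show ?thesis by (simp add: E_def E'_def)
qed



lemma vec_comp_meas[measurable (raw)]:
  fixes s :: "'x \<Rightarrow> real^'m::finite"
  assumes "s \<in> borel_measurable N"
  shows "(\<lambda>x. s x $ i) \<in> borel_measurable N"
  unfolding cart_eq_inner_axis using assms by measurable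

lemma vec_meas_from_comp:
  fixes s :: "'x \<Rightarrow> real^'m::finite"
  assumes "\<And>i. (\<lambda>x. s x $ i) \<in> borel_measurable N"
  shows "s \<in> borel_measurable N"
  unfolding borel_measurable_euclidean_space[where f=s]
proof
  fix b :: "real^'m" assume "b \<in> Basis"
  then obtain i u where "b = axis i u" "u \<in> Basis" by (auto simp: Basis_vec_def)
  then have "(\<lambda>x. s x \<bullet> b) = (\<lambda>x. s x $ i * u)" by (simp add: inner_axis)
  then show "(\<lambda>x. s x \<bullet> b) \<in> borel_measurable N" using assms[of i] by simp
qed

lemma pcs_loss_alt: "pcs_loss Mb y z = (\<Sum>i\<in>UNIV. Mb $ y $ i * - ln (softm z i))"
  unfolding pcs_loss_def softm_def by (simp add: sum_negf)

lemma softm_le1: "softm z i \<le> 1"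
proof -
  have "exp (z $ i) \<le> (\<Sum>j\<in>UNIV. exp (z $ j))"
    by (rule member_le_sum) auto
  moreover have "(\<Sum>j\<in>UNIV. exp (z $ j)) > 0" by (auto intro: sum_pos)
  ultimately show ?thesis unfolding softm_def by (simp add: divide_le_eq_1)
qed

lemma neg_ln_softm_nonneg: "0 \<le> - ln (softm z i)"
  using softm_pos[of z i] softm_le1[of z i] by simp

lemma pcs_loss_nonneg:
  assumes "\<And>i. Mb $ y $ i > 0" shows "0 \<le> pcs_loss Mb y z"
  unfolding pcs_loss_alt using assms neg_ln_softm_nonneg
  by (intro sum_nonneg mult_nonneg_nonneg) (auto intro: less_imp_le)

lemma pcs_loss_meas[measurable (raw)]:
  fixes s :: "'x \<Rightarrow> real^'m::finite"
  assumes "s \<in> borel_measurable N"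
  shows "(\<lambda>x. pcs_loss Mb y (s x)) \<in> borel_measurable N"
  unfolding pcs_loss_def using assms by measurable

lemma nn_integral_sum2:
  fixes f :: "'a::finite \<Rightarrow> 'b::finite \<Rightarrow> 'w \<Rightarrow> ennreal"
  assumes "\<And>a y. f a y \<in> borel_measurable M"
  shows "(\<integral>\<^sup>+w. (\<Sum>a\<in>UNIV. \<Sum>y\<in>UNIV. f a y w) \<partial>M) = (\<Sum>a\<in>UNIV. \<Sum>y\<in>UNIV. (\<integral>\<^sup>+w. f a y w \<partial>M))"
proof -
  have "(\<integral>\<^sup>+w. (\<Sum>a\<in>UNIV. \<Sum>y\<in>UNIV. f a y w) \<partial>M) = (\<Sum>a\<in>UNIV. (\<integral>\<^sup>+w. (\<Sum>y\<in>UNIV. f a y w) \<partial>M))"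
    by (rule nn_integral_sum) (use assms in auto)
  also have "\<dots> = (\<Sum>a\<in>UNIV. \<Sum>y\<in>UNIV. (\<integral>\<^sup>+w. f a y w \<partial>M))"
    by (intro sum.cong refl nn_integral_sum) (use assms in auto)
  finally show ?thesis .
qed

theorem proposition3:
  fixes M :: "'w measure" and \<X> :: "(real^'d) set"
    and X :: "'w \<Rightarrow> real^'d" and A :: "'w \<Rightarrow> 'a::finite"
    and Y :: "'w \<Rightarrow> 'm::finite" and K :: "'w \<Rightarrow> 'k::finite"
    and \<eta> :: "real^'d \<Rightarrow> 'a \<Rightarrow> 'k \<Rightarrow> real^'m"
    and q :: "real^'d \<Rightarrow> 'a \<Rightarrow> real"
    and Ug :: "'u set" and Ul :: "'k \<Rightarrow> 'u set"
    and D :: "'a \<Rightarrow> 'k \<Rightarrow> 'u \<Rightarrow> real^'m^'m"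
    and lam1 lam2 :: "'u \<Rightarrow> real" and mu1 mu2 :: "'k \<Rightarrow> 'u \<Rightarrow> real"
    and \<kappa> :: real and k :: 'k
    and s_opt :: "real^'d \<Rightarrow> real^'m"
  defines "SX \<equiv> restrict_space borel \<X>"
    and "p \<equiv> \<lambda>a k'. measure M {w \<in> space M. A w = a \<and> K w = k'}"
    and "Mk \<equiv> \<lambda>a. Mmat (measure M {w \<in> space M. A w = a \<and> K w = k}) lam1 lam2 (mu1 k) (mu2 k) Ug (Ul k) (D a k)"
    and "Ek \<equiv> {w \<in> space M. K w = k}"
  assumes "prob_space M"
    and "X \<in> M \<rightarrow>\<^sub>M SX"
    and "A \<in> M \<rightarrow>\<^sub>M count_space UNIV"
    and "Y \<in> M \<rightarrow>\<^sub>M count_space UNIV"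
    and "K \<in> M \<rightarrow>\<^sub>M count_space UNIV"
    and "\<And>a k'. p a k' > 0"
    and "finite Ug" and "\<And>k'. finite (Ul k')"
    \<comment> \<open>eta is (a version of) the Bayes score P(Y = y | X = x, A = a, K = k), valued in the simplex\<close>
    and "\<And>a k' y. (\<lambda>x. \<eta> x a k' $ y) \<in> borel_measurable SX"
    and "\<And>x a k' y. x \<in> \<X> \<Longrightarrow> \<eta> x a k' $ y \<ge> 0"
    and "\<And>x a k'. x \<in> \<X> \<Longrightarrow> (\<Sum>y\<in>UNIV. \<eta> x a k' $ y) = 1"
    and "\<And>B a k' y. B \<in> sets SX \<Longrightarrow>
          measure M {w \<in> space M. X w \<in> B \<and> A w = a \<and> K w = k' \<and> Y w = y}
          = (\<integral>w\<in>{w \<in> space M. X w \<in> B \<and> A w = a \<and> K w = k'}. \<eta> (X w) a k' $ y \<partial>M)"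
    \<comment> \<open>q x a is (a version of) the conditional probability P(A = a | X = x, K = k)\<close>
    and "\<And>a. (\<lambda>x. q x a) \<in> borel_measurable SX"
    and "\<And>x a. x \<in> \<X> \<Longrightarrow> 0 \<le> q x a \<and> q x a \<le> 1"
    and "\<And>B a. B \<in> sets SX \<Longrightarrow>
          measure M {w \<in> space M. X w \<in> B \<and> A w = a \<and> K w = k}
          = (\<integral>w\<in>{w \<in> space M. X w \<in> B \<and> K w = k}. q (X w) a \<partial>M)"
    \<comment> \<open>kappa makes all entries of Mbar(a,k) strictly positive\<close>
    and "\<And>a y i. Mbar \<kappa> (Mk a) $ y $ i > 0"
    \<comment> \<open>s_opt minimizes the expected loss over the local distribution of client k\<close>
    and "s_opt \<in> SX \<rightarrow>\<^sub>M borel"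
    and "\<And>s. s \<in> SX \<rightarrow>\<^sub>M borel \<Longrightarrow> 
          cond_exp_event M (\<lambda>w. pcs_loss (Mbar \<kappa> (Mk (A w))) (Y w) (s_opt (X w))) Ek
          \<le> cond_exp_event M (\<lambda>w. pcs_loss (Mbar \<kappa> (Mk (A w))) (Y w) (s (X w))) Ek"
  shows "AE w in M. K w = k \<longrightarrow>
           argmax_set (s_opt (X w))
           \<subseteq> argmax_set (\<Sum>a\<in>UNIV. q (X w) a *\<^sub>R (transpose (Mk a) *v \<eta> (X w) a k))"
proof -
  note assm = assms
  interpret prob_space M by (rule assms(5))
  have Xm: "X \<in> M \<rightarrow>\<^sub>M SX" by (rule assms(6))
  have Am[measurable]: "A \<in> M \<rightarrow>\<^sub>M count_space UNIV" by (rule assms(7))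
  have Ym[measurable]: "Y \<in> M \<rightarrow>\<^sub>M count_space UNIV" by (rule assms(8))
  have Km[measurable]: "K \<in> M \<rightarrow>\<^sub>M count_space UNIV" by (rule assms(9))
  have spSX: "space SX = \<X>" by (simp add: SX_def space_restrict_space)
  have Xin: "\<And>w. w \<in> space M \<Longrightarrow> X w \<in> \<X>" using measurable_space[OF Xm] spSX by auto
  have eta_nn: "\<And>x a k' y. x \<in> \<X> \<Longrightarrow> 0 \<le> \<eta> x a k' $ y" by (rule assms(14))
  have eta_le1: "\<And>x a k' y. x \<in> \<X> \<Longrightarrow> \<eta> x a k' $ y \<le> 1"
  proof -
    fix x a k' y assume x: "x \<in> \<X>"
    have "\<eta> x a k' $ y \<le> (\<Sum>y\<in>UNIV. \<eta> x a k' $ y)"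
      by (rule member_le_sum) (auto intro: eta_nn[OF x])
    then show "\<eta> x a k' $ y \<le> 1" using assms(15)[OF x] by simp
  qed
  have q01: "\<And>x a. x \<in> \<X> \<Longrightarrow> 0 \<le> q x a \<and> q x a \<le> 1" by (rule assms(18))
  have Mbpos: "\<And>a y i. Mbar \<kappa> (Mk a) $ y $ i > 0" by (rule assms(20))
  have etam[measurable]: "\<And>a k' y. (\<lambda>x. \<eta> x a k' $ y) \<in> borel_measurable SX" by (rule assms(13))
  have qm[measurable]: "\<And>a. (\<lambda>x. q x a) \<in> borel_measurable SX" by (rule assms(17))

  define cv where "cv x = (\<chi> i. \<Sum>a\<in>UNIV. \<Sum>y\<in>UNIV. q x a * \<eta> x a k $ y * Mbar \<kappa> (Mk a) $ y $ i)" for x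
  define Lc where "Lc x z = (\<Sum>i\<in>UNIV. cv x $ i * - ln (softm z i))" for x z
  define T where "T x = (\<Sum>a\<in>UNIV. q x a *\<^sub>R (transpose (Mk a) *v \<eta> x a k))" for x
  define s' where "s' x = (\<chi> i. ln (cv x $ i))" for x

  have cvm[measurable]: "\<And>i. (\<lambda>x. cv x $ i) \<in> borel_measurable SX"
    unfolding cv_def by simp
  have s'm: "s' \<in> borel_measurable SX"
    by (rule vec_meas_from_comp) (simp add: s'_def)

  have factA: "\<And>x z. x \<in> \<X> \<Longrightarrow>
     (\<Sum>a\<in>UNIV. \<Sum>y\<in>UNIV. q x a * \<eta> x a k $ y * pcs_loss (Mbar \<kappa> (Mk a)) y z) = Lc x z"
  proof -
    fix x z
    define f where "f a y i = q x a * \<eta> x a k $ y * Mbar \<kappa> (Mk a) $ y $ i * - ln (softm z i)" for a y i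
    have "(\<Sum>a\<in>UNIV. \<Sum>y\<in>UNIV. q x a * \<eta> x a k $ y * pcs_loss (Mbar \<kappa> (Mk a)) y z)
        = (\<Sum>a\<in>UNIV. \<Sum>y\<in>UNIV. \<Sum>i\<in>UNIV. f a y i)"
      by (simp add: pcs_loss_alt sum_distrib_left f_def mult.assoc)
    also have "\<dots> = (\<Sum>a\<in>UNIV. \<Sum>i\<in>UNIV. \<Sum>y\<in>UNIV. f a y i)"
      by (rule sum.cong[OF refl], rule sum.swap)
    also have "\<dots> = (\<Sum>i\<in>UNIV. \<Sum>a\<in>UNIV. \<Sum>y\<in>UNIV. f a y i)"
      by (rule sum.swap)
    also have "\<dots> = Lc x z"
      by (simp add: Lc_def cv_def f_def sum_distrib_right sum_negf)
    finally show "(\<Sum>a\<in>UNIV. \<Sum>y\<in>UNIV. q x a * \<eta> x a k $ y * pcs_loss (Mbar \<kappa> (Mk a)) y z) = Lc x z" .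
  qed
  have factB: "\<And>x i. x \<in> \<X> \<Longrightarrow> cv x $ i = T x $ i + \<kappa> * (\<Sum>a\<in>UNIV. q x a)"
  proof -
    fix x i assume x: "x \<in> \<X>"
    have T: "T x $ i = (\<Sum>a\<in>UNIV. q x a * (\<Sum>y\<in>UNIV. Mk a $ y $ i * \<eta> x a k $ y))"
      by (simp add: T_def sum_component matrix_vector_mul_component transpose_def inner_vec_def)
    have "cv x $ i = (\<Sum>a\<in>UNIV. \<Sum>y\<in>UNIV. q x a * (Mk a $ y $ i * \<eta> x a k $ y) + \<kappa> * (q x a * \<eta> x a k $ y))"
      by (simp add: cv_def Mbar_def algebra_simps)
    also have "\<dots> = (\<Sum>a\<in>UNIV. q x a * (\<Sum>y\<in>UNIV. Mk a $ y $ i * \<eta> x a k $ y) + \<kappa> * (q x a * (\<Sum>y\<in>UNIV. \<eta> x a k $ y)))"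
      by (simp add: sum.distrib sum_distrib_left)
    also have "\<dots> = T x $ i + \<kappa> * (\<Sum>a\<in>UNIV. q x a)"
      using assms(15)[OF x] by (simp add: T sum.distrib sum_distrib_left)
    finally show "cv x $ i = T x $ i + \<kappa> * (\<Sum>a\<in>UNIV. q x a)" .
  qed
  have argmaxB: "\<And>x. x \<in> \<X> \<Longrightarrow> argmax_set (cv x) = argmax_set (T x)"
    using factB by (simp add: argmax_set_def)
  have cv_cases: "\<And>x. x \<in> \<X> \<Longrightarrow> (\<forall>i. cv x $ i > 0) \<or> (\<forall>i. cv x $ i = 0)"
  proof -
    fix x assume x: "x \<in> \<X>"
    show "(\<forall>i. cv x $ i > 0) \<or> (\<forall>i. cv x $ i = 0)"
    proof (cases "\<exists>a. q x a > 0")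
      case True
      then obtain a0 where a0: "q x a0 > 0" by auto
      have "\<exists>y. \<eta> x a0 k $ y > 0"
      proof (rule ccontr)
        assume "\<not> ?thesis"
        then have "\<And>y. \<eta> x a0 k $ y = 0" using eta_nn[OF x, of a0 k] by (metis le_less)
        then show False using assms(15)[OF x, of a0 k] by simp
      qed
      then obtain y0 where y0: "\<eta> x a0 k $ y0 > 0" by auto
      have "cv x $ i > 0" for i
        unfolding cv_def vec_lambda_beta
      proof (rule sum_pos2[where i=a0])
        show "0 < (\<Sum>y\<in>UNIV. q x a0 * \<eta> x a0 k $ y * Mbar \<kappa> (Mk a0) $ y $ i)"
          proof (rule sum_pos2[where i=y0])
            show "0 < q x a0 * \<eta> x a0 k $ y0 * Mbar \<kappa> (Mk a0) $ y0 $ i"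
              using a0 y0 Mbpos by simp
            show "\<And>y. y \<in> UNIV \<Longrightarrow> 0 \<le> q x a0 * \<eta> x a0 k $ y * Mbar \<kappa> (Mk a0) $ y $ i"
              using a0 eta_nn[OF x, of a0 k] Mbpos[of a0 _ i] by (metis less_imp_le mult_nonneg_nonneg)
          qed auto
        show "\<And>a. a \<in> UNIV \<Longrightarrow> 0 \<le> (\<Sum>y\<in>UNIV. q x a * \<eta> x a k $ y * Mbar \<kappa> (Mk a) $ y $ i)"
        proof (rule sum_nonneg)
          fix a y
          show "0 \<le> q x a * \<eta> x a k $ y * Mbar \<kappa> (Mk a) $ y $ i"
            using q01[OF x, of a] eta_nn[OF x, of a k y] Mbpos[of a y i] by (metis less_imp_le mult_nonneg_nonneg)
        qed
      qed auto
      then show ?thesis by auto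
    next
      case False
      then have "\<And>a. q x a = 0" using q01[OF x] by (meson le_less not_less)
      then show ?thesis by (simp add: cv_def)
    qed
  qed
  have cv_nn: "\<And>x i. x \<in> \<X> \<Longrightarrow> cv x $ i \<ge> 0"
    using cv_cases by (metis less_imp_le order_refl)
  have Lc_nn: "\<And>x z. x \<in> \<X> \<Longrightarrow> Lc x z \<ge> 0"
    unfolding Lc_def using cv_nn neg_ln_softm_nonneg by (intro sum_nonneg mult_nonneg_nonneg) auto
  have point: "\<And>x z. x \<in> \<X> \<Longrightarrow> Lc x (s' x) \<le> Lc x z"
  proof -
    fix x z assume x: "x \<in> \<X>"
    show "Lc x (s' x) \<le> Lc x z"
    proof (cases "\<forall>i. cv x $ i > 0")
      case True
      then have "\<And>i. softm (s' x) i = cv x $ i / (\<Sum>j\<in>UNIV. cv x $ j)"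
        by (simp add: softm_def s'_def)
      then show ?thesis unfolding Lc_def using gibbs(1)[of "cv x" z] True by simp
    next
      case False
      then have "\<forall>i. cv x $ i = 0" using cv_cases[OF x] by auto
      then show ?thesis by (simp add: Lc_def)
    qed
  qed
  have point_strict: "\<And>x z. x \<in> \<X> \<Longrightarrow> \<not> argmax_set z \<subseteq> argmax_set (T x) \<Longrightarrow> Lc x (s' x) < Lc x z"
  proof -
    fix x z assume x: "x \<in> \<X>" and na: "\<not> argmax_set z \<subseteq> argmax_set (T x)"
    show "Lc x (s' x) < Lc x z"
    proof (cases "\<forall>i. cv x $ i > 0")
      case True
      then have "\<And>i. softm (s' x) i = cv x $ i / (\<Sum>j\<in>UNIV. cv x $ j)"
        by (simp add: softm_def s'_def)
      then show ?thesis unfolding Lc_def using gibbs(2)[of "cv x" z] True na argmaxB[OF x] by simp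
    next
      case False
      then have "\<forall>i. cv x $ i = 0" using cv_cases[OF x] by auto
      then have "argmax_set (cv x) = UNIV" by (simp add: argmax_set_def)
      then show ?thesis using na argmaxB[OF x] by simp
    qed
  qed
  define Bd where "Bd = (\<Sum>i\<in>UNIV. (\<Sum>a\<in>UNIV. \<Sum>y\<in>UNIV. Mbar \<kappa> (Mk a) $ y $ i) * - ln (softm 0 i))"
  have bound: "\<And>x. x \<in> \<X> \<Longrightarrow> Lc x (s' x) \<le> Bd"
  proof -
    fix x assume x: "x \<in> \<X>"
    have "Lc x 0 \<le> Bd" unfolding Lc_def Bd_def
    proof (intro sum_mono mult_right_mono neg_ln_softm_nonneg)
      fix i
      show "cv x $ i \<le> (\<Sum>a\<in>UNIV. \<Sum>y\<in>UNIV. Mbar \<kappa> (Mk a) $ y $ i)"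
        unfolding cv_def vec_lambda_beta
      proof (intro sum_mono)
        fix a y
        have "q x a * \<eta> x a k $ y \<le> 1"
          using q01[OF x, of a] eta_nn[OF x, of a k y] eta_le1[OF x, of a k y] by (intro mult_le_one) auto
        then show "q x a * \<eta> x a k $ y * Mbar \<kappa> (Mk a) $ y $ i \<le> Mbar \<kappa> (Mk a) $ y $ i"
          using Mbpos[of a y i] mult_right_mono[of "q x a * \<eta> x a k $ y" 1 "Mbar \<kappa> (Mk a) $ y $ i"] by simp
      qed
    qed
    then show "Lc x (s' x) \<le> Bd" using point[OF x, of 0] by simp
  qed

  define F where "F s = (\<integral>\<^sup>+w. ennreal (pcs_loss (Mbar \<kappa> (Mk (A w))) (Y w) (s (X w))) * indicator Ek w \<partial>M)" for s
  define G where "G s = (\<integral>\<^sup>+w. ennreal (Lc (X w) (s (X w))) * indicator Ek w \<partial>M)" for s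
  have Ek_sets[measurable]: "Ek \<in> sets M" unfolding Ek_def by measurable
  have Lcm: "(\<lambda>w. Lc (X w) (s (X w))) \<in> borel_measurable M" if sm: "s \<in> borel_measurable SX" for s
  proof -
    note [measurable] = sm
    have "(\<lambda>x. Lc x (s x)) \<in> borel_measurable SX" unfolding Lc_def softm_def by measurable
    then show ?thesis by (rule measurable_compose[OF Xm])
  qed
  have FG: "\<And>s. s \<in> borel_measurable SX \<Longrightarrow> F s = G s"
  proof -
    fix s :: "real^'d \<Rightarrow> real^'m" assume sm[measurable]: "s \<in> borel_measurable SX"
    note Xm[measurable]
    define l where "l a y x = pcs_loss (Mbar \<kappa> (Mk a)) y (s x)" for a y x
    have lm[measurable]: "\<And>a y. l a y \<in> borel_measurable SX" unfolding l_def by measurable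
    have lnn: "\<And>a y x. l a y x \<ge> 0" unfolding l_def by (rule pcs_loss_nonneg) (rule Mbpos)
    define Eay where "Eay a y = {w\<in>space M. A w = a \<and> K w = k \<and> Y w = y}" for a y
    have Eaym[measurable]: "\<And>a y. Eay a y \<in> sets M" unfolding Eay_def by measurable
    have step1: "F s = (\<integral>\<^sup>+w. (\<Sum>a\<in>UNIV. \<Sum>y\<in>UNIV. ennreal (l a y (X w)) * indicator (Eay a y) w) \<partial>M)"
      unfolding F_def
    proof (intro nn_integral_cong)
      fix w assume w: "w \<in> space M"
      have "\<And>a y. ennreal (l a y (X w)) * indicator (Eay a y) w
          = (if y = Y w then (if a = A w then ennreal (l a y (X w)) * indicator Ek w else 0) else 0)"
        using w by (auto simp: Eay_def Ek_def split: split_indicator)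
      then have "(\<Sum>a\<in>UNIV. \<Sum>y\<in>UNIV. ennreal (l a y (X w)) * indicator (Eay a y) w)
          = ennreal (l (A w) (Y w) (X w)) * indicator Ek w" by (simp only:) simp
      then show "ennreal (pcs_loss (Mbar \<kappa> (Mk (A w))) (Y w) (s (X w))) * indicator Ek w
          = (\<Sum>a\<in>UNIV. \<Sum>y\<in>UNIV. ennreal (l a y (X w)) * indicator (Eay a y) w)"
        by (simp add: l_def)
    qed
    also have "\<dots> = (\<Sum>a\<in>UNIV. \<Sum>y\<in>UNIV. (\<integral>\<^sup>+w. ennreal (l a y (X w)) * indicator (Eay a y) w \<partial>M))"
      by (rule nn_integral_sum2) measurable
    also have "\<dots> = (\<Sum>a\<in>UNIV. \<Sum>y\<in>UNIV. (\<integral>\<^sup>+w. ennreal (l a y (X w)) * ennreal (\<eta> (X w) a k $ y) * ennreal (q (X w) a) * indicator Ek w \<partial>M))"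
    proof (intro sum.cong refl)
      fix a y
      have T1: "(\<integral>\<^sup>+w. ennreal (l a y (X w)) * indicator {w\<in>space M. A w = a \<and> K w = k \<and> Y w = y} w \<partial>M)
        = (\<integral>\<^sup>+w. ennreal (l a y (X w)) * ennreal (\<eta> (X w) a k $ y) * indicator {w\<in>space M. A w = a \<and> K w = k} w \<partial>M)"
      proof (rule transfer_density[OF assms(5) Xm, where P="\<lambda>w. A w = a \<and> K w = k" and P'="\<lambda>w. A w = a \<and> K w = k \<and> Y w = y"
            and h="\<lambda>x. \<eta> x a k $ y" and g="\<lambda>x. ennreal (l a y x)"])
        show "{w \<in> space M. A w = a \<and> K w = k} \<in> sets M" by measurable
        show "{w \<in> space M. A w = a \<and> K w = k \<and> Y w = y} \<in> sets M" by measurable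
        show "(\<lambda>x. \<eta> x a k $ y) \<in> borel_measurable SX" by measurable
        show "\<And>x. x \<in> space SX \<Longrightarrow> 0 \<le> \<eta> x a k $ y \<and> \<eta> x a k $ y \<le> 1"
          using eta_nn eta_le1 spSX by auto
        show "\<And>B. B \<in> sets SX \<Longrightarrow> measure M {w \<in> space M. X w \<in> B \<and> A w = a \<and> K w = k \<and> Y w = y}
          = (\<integral>w\<in>{w \<in> space M. X w \<in> B \<and> A w = a \<and> K w = k}. \<eta> (X w) a k $ y \<partial>M)"
          by (rule assms(16))
        show "(\<lambda>x. ennreal (l a y x)) \<in> borel_measurable SX" by measurable
      qed
      have T2: "(\<integral>\<^sup>+w. ennreal (l a y (X w)) * ennreal (\<eta> (X w) a k $ y) * indicator {w\<in>space M. A w = a \<and> K w = k} w \<partial>M)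
        = (\<integral>\<^sup>+w. ennreal (l a y (X w)) * ennreal (\<eta> (X w) a k $ y) * ennreal (q (X w) a) * indicator {w\<in>space M. K w = k} w \<partial>M)"
      proof (rule transfer_density[OF assms(5) Xm, where P="\<lambda>w. K w = k" and P'="\<lambda>w. A w = a \<and> K w = k"
            and h="\<lambda>x. q x a" and g="\<lambda>x. ennreal (l a y x) * ennreal (\<eta> x a k $ y)"])
        show "{w \<in> space M. K w = k} \<in> sets M" by measurable
        show "{w \<in> space M. A w = a \<and> K w = k} \<in> sets M" by measurable
        show "(\<lambda>x. q x a) \<in> borel_measurable SX" by measurable
        show "\<And>x. x \<in> space SX \<Longrightarrow> 0 \<le> q x a \<and> q x a \<le> 1"
          using q01 spSX by auto
        show "\<And>B. B \<in> sets SX \<Longrightarrow> measure M {w \<in> space M. X w \<in> B \<and> A w = a \<and> K w = k}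
          = (\<integral>w\<in>{w \<in> space M. X w \<in> B \<and> K w = k}. q (X w) a \<partial>M)"
          by (rule assms(19))
        show "(\<lambda>x. ennreal (l a y x) * ennreal (\<eta> x a k $ y)) \<in> borel_measurable SX" by measurable
      qed
      show "(\<integral>\<^sup>+w. ennreal (l a y (X w)) * indicator (Eay a y) w \<partial>M)
          = (\<integral>\<^sup>+w. ennreal (l a y (X w)) * ennreal (\<eta> (X w) a k $ y) * ennreal (q (X w) a) * indicator Ek w \<partial>M)"
        using T1 T2 by (simp add: Eay_def Ek_def)
    qed
    also have "\<dots> = (\<integral>\<^sup>+w. (\<Sum>a\<in>UNIV. \<Sum>y\<in>UNIV. ennreal (l a y (X w)) * ennreal (\<eta> (X w) a k $ y) * ennreal (q (X w) a) * indicator Ek w) \<partial>M)"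
      by (rule nn_integral_sum2[symmetric]) measurable
    also have "\<dots> = G s"
      unfolding G_def
    proof (intro nn_integral_cong)
      fix w assume w: "w \<in> space M"
      have x: "X w \<in> \<X>" using Xin[OF w] .
      have "(\<Sum>a\<in>UNIV. \<Sum>y\<in>UNIV. ennreal (l a y (X w)) * ennreal (\<eta> (X w) a k $ y) * ennreal (q (X w) a) * indicator Ek w)
          = (\<Sum>a\<in>UNIV. \<Sum>y\<in>UNIV. ennreal (q (X w) a * \<eta> (X w) a k $ y * l a y (X w))) * indicator Ek w"
        using lnn eta_nn[OF x] q01[OF x]
        by (simp add: sum_distrib_right ennreal_mult'' ennreal_mult mult_ac)
      also have "\<dots> = ennreal (\<Sum>a\<in>UNIV. \<Sum>y\<in>UNIV. q (X w) a * \<eta> (X w) a k $ y * l a y (X w)) * indicator Ek w"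
        using lnn eta_nn[OF x] q01[OF x]
        by (simp add: sum_ennreal sum_nonneg)
      also have "\<dots> = ennreal (Lc (X w) (s (X w))) * indicator Ek w"
        using factA[OF x] by (simp add: l_def)
      finally show "(\<Sum>a\<in>UNIV. \<Sum>y\<in>UNIV. ennreal (l a y (X w)) * ennreal (\<eta> (X w) a k $ y) * ennreal (q (X w) a) * indicator Ek w)
          = ennreal (Lc (X w) (s (X w))) * indicator Ek w" .
    qed
    finally show "F s = G s" .
  qed
  have Ek_pos: "emeasure M Ek \<noteq> 0"
  proof -
    have "0 < measure M {w \<in> space M. A w = undefined \<and> K w = k}" using assms(10) by (simp add: p_def)
    also have "\<dots> \<le> measure M Ek"
      by (rule finite_measure_mono) (use Ek_sets in \<open>auto simp: Ek_def\<close>)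
    finally show ?thesis by (simp add: emeasure_eq_measure)
  qed
  have Ek_fin: "emeasure M Ek \<noteq> \<infinity>" by simp
  have opt: "F s_opt \<le> F s'"
  proof -
    have "F s_opt / emeasure M Ek \<le> F s' / emeasure M Ek"
      using assms(22)[OF s'm] by (simp add: cond_exp_event_def F_def)
    then have "F s_opt / emeasure M Ek * emeasure M Ek \<le> F s' / emeasure M Ek * emeasure M Ek"
      by (rule mult_right_mono) simp
    moreover have "\<And>a. a / emeasure M Ek * emeasure M Ek = a"
      using Ek_pos Ek_fin by (simp add: ennreal_divide_times ennreal_divide_self less_top[symmetric])
    ultimately show ?thesis by simp
  qed
  have Gfin: "G s' < \<infinity>"
  proof -
    have "G s' \<le> (\<integral>\<^sup>+w. ennreal Bd \<partial>M)"
      unfolding G_def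
    proof (intro nn_integral_mono)
      fix w assume w: "w \<in> space M"
      have "ennreal (Lc (X w) (s' (X w))) * indicator Ek w \<le> ennreal (Lc (X w) (s' (X w)))"
        by (auto split: split_indicator)
      also have "\<dots> \<le> ennreal Bd" using bound[OF Xin[OF w]] by (rule ennreal_leI)
      finally show "ennreal (Lc (X w) (s' (X w))) * indicator Ek w \<le> ennreal Bd" .
    qed
    also have "\<dots> = ennreal Bd" by (simp add: emeasure_space_1)
    finally show ?thesis by (simp add: top.not_eq_extremum order_le_less_trans)
  qed
  define d where "d w = Lc (X w) (s_opt (X w)) - Lc (X w) (s' (X w))" for w
  have dm[measurable]: "(\<lambda>w. d w) \<in> borel_measurable M"
    unfolding d_def using Lcm[OF assms(21)] Lcm[OF s'm] by measurable
  have split: "G s_opt = G s' + (\<integral>\<^sup>+w. ennreal (d w) * indicator Ek w \<partial>M)"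
  proof -
    have "G s_opt = (\<integral>\<^sup>+w. ennreal (Lc (X w) (s' (X w))) * indicator Ek w + ennreal (d w) * indicator Ek w \<partial>M)"
      unfolding G_def
    proof (intro nn_integral_cong)
      fix w assume w: "w \<in> space M"
      have "Lc (X w) (s_opt (X w)) = Lc (X w) (s' (X w)) + d w" by (simp add: d_def)
      moreover have "0 \<le> d w" using point[OF Xin[OF w]] by (simp add: d_def)
      moreover have "0 \<le> Lc (X w) (s' (X w))" using Lc_nn[OF Xin[OF w]] .
      ultimately show "ennreal (Lc (X w) (s_opt (X w))) * indicator Ek w
          = ennreal (Lc (X w) (s' (X w))) * indicator Ek w + ennreal (d w) * indicator Ek w"
        by (simp add: ennreal_plus distrib_right)
    qed
    also have "\<dots> = G s' + (\<integral>\<^sup>+w. ennreal (d w) * indicator Ek w \<partial>M)"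
      unfolding G_def using Lcm[OF s'm] by (intro nn_integral_add) auto
    finally show ?thesis .
  qed
  have D0: "(\<integral>\<^sup>+w. ennreal (d w) * indicator Ek w \<partial>M) = 0"
  proof -
    have "G s' + (\<integral>\<^sup>+w. ennreal (d w) * indicator Ek w \<partial>M) \<le> G s'"
      using opt FG[OF assms(21)] FG[OF s'm] split by simp
    then show ?thesis using Gfin by auto
  qed
  have "AE w in M. ennreal (d w) * indicator Ek w = 0"
    using D0 by (subst (asm) nn_integral_0_iff_AE) (use Ek_sets in auto)
  moreover have key: "\<And>w. w \<in> space M \<Longrightarrow> ennreal (d w) * indicator Ek w = 0 \<Longrightarrow> K w = k \<Longrightarrow>
      argmax_set (s_opt (X w)) \<subseteq> argmax_set (T (X w))"
  proof (rule ccontr)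
    fix w assume w: "w \<in> space M" and z: "ennreal (d w) * indicator Ek w = 0" and Kw: "K w = k"
      and na: "\<not> argmax_set (s_opt (X w)) \<subseteq> argmax_set (T (X w))"
    then have "d w > 0" "w \<in> Ek" using point_strict[OF Xin[OF w]] w by (auto simp: d_def Ek_def)
    then show False using z by simp
  qed
  ultimately show ?thesis
    by (elim AE_mp) (auto intro!: AE_I2 simp: T_def)
qed

end
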